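(* Consider difference logic. Let $G$ be a finite set of difference-logic predicates and let $m$ be the number of variables occurring in $G$. Then $D_T(G) \le \log_2 m$; that is, for every subset $G'\subseteq G$ and every integer $N \ge \log_2 m$, the saturation procedure $\mathrm{Sat}_N(G')$ returns UNSATISFIABLE if and only if $G'$ is unsatisfiable over the reals.
   Context: Difference-logic predicates have the form $x \bowtie y + c$ where $x,y$ are real-valued variables, $\bowtie\in\{<,\le\}$ and $c$ is a real constant. The inference rules are: (a) from $X \le Z + C$ and $Z \bowtie Y + D$ derive $X \bowtie Y + (C+D)$; (b) from $X < Z + C$ and $Z \bowtie Y + D$ derive $X < Y + (C+D)$; (c) from $X < Y + C$ and $Y \bowtie X + D$ with $C+D \le 0$ derive $\bot$; (d) from $X \le Y + C$ and $Y \le X + D$ with $C + D < 0$ derive $\bot$; (e) from $X \le Y$ and $Y \le X$ derive $X = Y$. Saturation procedure $\mathrm{Sat}_N(H)$: (1) $W := H$. (2) Repeat $N$ times: $W' := W$; for every predicate $g\notin W'$ derivable in one rule application from predicates all in $W'$, add $g$ to $W$. (3) Return UNSATISFIABLE if $\bot$ is derivable in one rule application from predicates in $W$, else SATISFIABLE. $D_T(G)$ denotes the maximum over $G'\subseteq G$ of the least number $d$ such that $\mathrm{Sat}_N(G')$ correctly decides satisfiability of $G'$ for all $N\ge d$. *)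

theory Defs
  imports Complex_Main
begin

text \<open>Difference-logic atoms over variables of type 'v.
  DLe x y c  is  x \<le> y + c ;  DLt x y c  is  x < y + c ;
  DEq x y  is  x = y  (only produced by rule (e)).\<close>
datatype 'v dl = DLe 'v 'v real | DLt 'v 'v real | DEq 'v 'v

fun is_diff_pred :: "'v dl \<Rightarrow> bool" where
  "is_diff_pred (DEq _ _) = False"
| "is_diff_pred _ = True"

fun holds :: "('v \<Rightarrow> real) \<Rightarrow> 'v dl \<Rightarrow> bool" where
  "holds \<rho> (DLe x y c) = (\<rho> x \<le> \<rho> y + c)"
| "holds \<rho> (DLt x y c) = (\<rho> x < \<rho> y + c)"
| "holds \<rho> (DEq x y) = (\<rho> x = \<rho> y)"

definition satisfiable :: "'v dl set \<Rightarrow> bool" where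
  "satisfiable H \<longleftrightarrow> (\<exists>\<rho>::'v \<Rightarrow> real. \<forall>g\<in>H. holds \<rho> g)"

fun vars_dl :: "'v dl \<Rightarrow> 'v set" where
  "vars_dl (DLe x y _) = {x, y}"
| "vars_dl (DLt x y _) = {x, y}"
| "vars_dl (DEq x y) = {x, y}"

definition vars_set :: "'v dl set \<Rightarrow> 'v set" where
  "vars_set H = (\<Union>g\<in>H. vars_dl g)"

inductive derive1 :: "'v dl set \<Rightarrow> 'v dl \<Rightarrow> bool" for W where
  rule_a_le: "\<lbrakk>DLe x z c \<in> W; DLe z y d \<in> W\<rbrakk> \<Longrightarrow> derive1 W (DLe x y (c + d))"
| rule_a_lt: "\<lbrakk>DLe x z c \<in> W; DLt z y d \<in> W\<rbrakk> \<Longrightarrow> derive1 W (DLt x y (c + d))"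
| rule_b_le: "\<lbrakk>DLt x z c \<in> W; DLe z y d \<in> W\<rbrakk> \<Longrightarrow> derive1 W (DLt x y (c + d))"
| rule_b_lt: "\<lbrakk>DLt x z c \<in> W; DLt z y d \<in> W\<rbrakk> \<Longrightarrow> derive1 W (DLt x y (c + d))"
| rule_e: "\<lbrakk>DLe x y 0 \<in> W; DLe y x 0 \<in> W\<rbrakk> \<Longrightarrow> derive1 W (DEq x y)"

text \<open>\<bottom> derivable in one application of rules (c), (d) from W.\<close>
definition derive_bot :: "'v dl set \<Rightarrow> bool" where
  "derive_bot W \<longleftrightarrow>
     (\<exists>x y c d. DLt x y c \<in> W \<and> (DLe y x d \<in> W \<or> DLt y x d \<in> W) \<and> c + d \<le> 0)
   \<or> (\<exists>x y c d. DLe x y c \<in> W \<and> DLe y x d \<in> W \<and> c + d < 0)"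

definition sat_step :: "'v dl set \<Rightarrow> 'v dl set" where
  "sat_step W = W \<union> {g. derive1 W g}"

text \<open>Sat_N(H) returns UNSATISFIABLE iff this is True.\<close>
definition Sat_unsat :: "nat \<Rightarrow> 'v dl set \<Rightarrow> bool" where
  "Sat_unsat N H \<longleftrightarrow> derive_bot ((sat_step ^^ N) H)"

end

theory Submission
  imports Defs
begin

fun src :: "'v dl \<Rightarrow> 'v" where
  "src (DLe x y c) = x" | "src (DLt x y c) = x" | "src (DEq x y) = x"
fun dst :: "'v dl \<Rightarrow> 'v" where
  "dst (DLe x y c) = y" | "dst (DLt x y c) = y" | "dst (DEq x y) = y"
fun cst :: "'v dl \<Rightarrow> real" where
  "cst (DLe x y c) = c" | "cst (DLt x y c) = c" | "cst (DEq x y) = 0"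
fun strict :: "'v dl \<Rightarrow> bool" where
  "strict (DLt x y c) = True" | "strict (DLe x y c) = False" | "strict (DEq x y) = False"

definition mk :: "'v \<Rightarrow> 'v \<Rightarrow> real \<Rightarrow> bool \<Rightarrow> 'v dl" where
  "mk x y c s = (if s then DLt x y c else DLe x y c)"
definition comb :: "'v dl \<Rightarrow> 'v dl \<Rightarrow> 'v dl" where
  "comb a b = mk (src a) (dst b) (cst a + cst b) (strict a \<or> strict b)"

fun chain :: "'v dl list \<Rightarrow> bool" where
  "chain [] = True" | "chain [a] = True" | "chain (a # b # r) = (dst a = src b \<and> chain (b # r))"

definition wc :: "'v dl list \<Rightarrow> real" where "wc ws = sum_list (map cst ws)"
definition sw :: "'v dl list \<Rightarrow> bool" where "sw ws = (\<exists>a\<in>set ws. strict a)"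
definition col :: "'v dl list \<Rightarrow> 'v dl" where
  "col ws = mk (src (hd ws)) (dst (last ws)) (wc ws) (sw ws)"
definition badw :: "'v dl set \<Rightarrow> 'v dl list \<Rightarrow> bool" where
  "badw S ws = (ws \<noteq> [] \<and> chain ws \<and> set ws \<subseteq> S \<and> dst (last ws) = src (hd ws)
     \<and> (wc ws < 0 \<or> (wc ws = 0 \<and> sw ws)))"

lemma mk_diff[simp]: "is_diff_pred (mk x y c s)" "src (mk x y c s) = x" "dst (mk x y c s) = y"
  "cst (mk x y c s) = c" "strict (mk x y c s) = s"
  by (auto simp: mk_def)

lemma diff_mk: "is_diff_pred a \<Longrightarrow> a = mk (src a) (dst a) (cst a) (strict a)"
  by (cases a) (auto simp: mk_def)

lemma vars_dl_sd: "vars_dl a = {src a, dst a}"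
  by (cases a) auto

lemma holds_iff: "is_diff_pred a \<Longrightarrow> holds \<rho> a =
   (if strict a then \<rho> (src a) < \<rho> (dst a) + cst a else \<rho> (src a) \<le> \<rho> (dst a) + cst a)"
  by (cases a) auto

lemma derive1_comb: "a \<in> W \<Longrightarrow> b \<in> W \<Longrightarrow> is_diff_pred a \<Longrightarrow> is_diff_pred b \<Longrightarrow> dst a = src b
  \<Longrightarrow> derive1 W (comb a b)"
  by (cases a; cases b) (auto simp: comb_def mk_def intro: derive1.intros)

lemma derive1_sound: "derive1 W g \<Longrightarrow> \<forall>a\<in>W. holds \<rho> a \<Longrightarrow> holds \<rho> g"
proof (induction rule: derive1.induct)
  case (rule_a_le x z c y d)
  then have "holds \<rho> (DLe x z c)" "holds \<rho> (DLe z y d)" by blast+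
  then show ?case by simp
next
  case (rule_a_lt x z c y d)
  then have "holds \<rho> (DLe x z c)" "holds \<rho> (DLt z y d)" by blast+
  then show ?case by simp
next
  case (rule_b_le x z c y d)
  then have "holds \<rho> (DLt x z c)" "holds \<rho> (DLe z y d)" by blast+
  then show ?case by simp
next
  case (rule_b_lt x z c y d)
  then have "holds \<rho> (DLt x z c)" "holds \<rho> (DLt z y d)" by blast+
  then show ?case by simp
next
  case (rule_e x y)
  then have "holds \<rho> (DLe x y 0)" "holds \<rho> (DLe y x 0)" by blast+
  then show ?case by simp
qed

lemma steps_sound: "\<forall>a\<in>H. holds \<rho> a \<Longrightarrow> \<forall>a\<in>(sat_step ^^ N) H. holds \<rho> a"
  by (induction N) (auto simp: sat_step_def intro: derive1_sound)

lemma bot_unsat: "derive_bot W \<Longrightarrow> \<forall>a\<in>W. holds \<rho> a \<Longrightarrow> False"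
proof -
  assume b: "derive_bot W" and h: "\<forall>a\<in>W. holds \<rho> a"
  show False using b unfolding derive_bot_def
  proof (elim disjE exE conjE)
    fix x y c d assume "DLt x y c \<in> W" "DLe y x d \<in> W" "c + d \<le> 0"
    then show False using h[rule_format, of "DLt x y c"] h[rule_format, of "DLe y x d"] by simp
  next
    fix x y c d assume "DLt x y c \<in> W" "DLt y x d \<in> W" "c + d \<le> 0"
    then show False using h[rule_format, of "DLt x y c"] h[rule_format, of "DLt y x d"] by simp
  next
    fix x y c d assume "DLe x y c \<in> W" "DLe y x d \<in> W" "c + d < 0"
    then show False using h[rule_format, of "DLe x y c"] h[rule_format, of "DLe y x d"] by simp
  qed
qed

lemma steps_mono: "H \<subseteq> (sat_step ^^ N) H"
  by (induction N) (auto simp: sat_step_def)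

lemma step_mono: "(sat_step ^^ N) H \<subseteq> (sat_step ^^ Suc N) H"
  by (auto simp: sat_step_def)

lemma chain_append: "chain (xs @ ys) = (chain xs \<and> chain ys \<and> (xs \<noteq> [] \<longrightarrow> ys \<noteq> [] \<longrightarrow> dst (last xs) = src (hd ys)))"
proof (induction xs rule: chain.induct)
  case 1 then show ?case by simp
next
  case (2 a) then show ?case by (cases ys) auto
next
  case (3 a b r) then show ?case by auto
qed

lemma wc_append[simp]: "wc (xs @ ys) = wc xs + wc ys" by (simp add: wc_def)
lemma sw_append[simp]: "sw (xs @ ys) = (sw xs \<or> sw ys)" by (auto simp: sw_def)
lemma wc_Cons[simp]: "wc (x # ys) = cst x + wc ys" by (simp add: wc_def)
lemma sw_Cons[simp]: "sw (x # ys) = (strict x \<or> sw ys)" by (auto simp: sw_def)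
lemma wc_Nil[simp]: "wc [] = 0" by (simp add: wc_def)
lemma sw_Nil[simp]: "\<not> sw []" by (auto simp: sw_def)

lemma col_append: "xs \<noteq> [] \<Longrightarrow> ys \<noteq> [] \<Longrightarrow> col (xs @ ys) = comb (col xs) (col ys)"
  by (simp add: col_def comb_def)

lemma col_in: "ws \<noteq> [] \<Longrightarrow> chain ws \<Longrightarrow> set ws \<subseteq> H \<Longrightarrow> \<forall>a\<in>H. is_diff_pred a
  \<Longrightarrow> length ws \<le> 2 ^ N \<Longrightarrow> col ws \<in> (sat_step ^^ N) H"
proof (induction N arbitrary: ws)
  case 0
  then obtain a where "ws = [a]" by (cases ws) auto
  with 0 show ?case by (auto simp: col_def) (metis diff_mk)
next
  case (Suc N)
  show ?case
  proof (cases "length ws \<le> 2 ^ N")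
    case True
    then show ?thesis using Suc step_mono by blast
  next
    case False
    define A where "A = take (2^N) ws"
    define B where "B = drop (2^N) ws"
    have ws: "ws = A @ B" by (simp add: A_def B_def)
    have A: "A \<noteq> []" "length A \<le> 2^N" using False by (auto simp: A_def)
    have B: "B \<noteq> []" "length B \<le> 2^N" using False Suc.prems by (auto simp: B_def)
    have ch: "chain A" "chain B" "dst (last A) = src (hd B)"
      using Suc.prems(2) A B unfolding ws chain_append by auto
    have inA: "col A \<in> (sat_step ^^ N) H"
      using Suc.IH[of A] A ch Suc.prems unfolding ws by auto
    have inB: "col B \<in> (sat_step ^^ N) H"
      using Suc.IH[of B] B ch Suc.prems unfolding ws by auto
    have "derive1 ((sat_step ^^ N) H) (comb (col A) (col B))"
      by (rule derive1_comb[OF inA inB]) (auto simp: col_def ch)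
    then have "comb (col A) (col B) \<in> sat_step ((sat_step ^^ N) H)"
      unfolding sat_step_def[of "(sat_step ^^ N) H"] by blast
    then show ?thesis unfolding ws col_append[OF A(1) B(1)] by simp
  qed
qed

lemma bot_mk: "mk x y c1 s1 \<in> W \<Longrightarrow> mk y x c2 s2 \<in> W \<Longrightarrow> c1 + c2 < 0 \<or> (c1 + c2 = 0 \<and> (s1 \<or> s2))
  \<Longrightarrow> derive_bot W"
  unfolding derive_bot_def mk_def
  by (cases s1; cases s2) (auto, (metis add.commute order.refl less_imp_le)+)

lemma bad_detect: "badw H ws \<Longrightarrow> \<forall>a\<in>H. is_diff_pred a \<Longrightarrow> length ws \<le> 2 ^ N
  \<Longrightarrow> derive_bot ((sat_step ^^ N) H)"
proof -
  assume bw: "badw H ws" and d: "\<forall>a\<in>H. is_diff_pred a" and l: "length ws \<le> 2 ^ N"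
  show ?thesis
  proof (cases "length ws = 1")
    case True
    then obtain a where a: "ws = [a]" by (cases ws) auto
    with bw d have "a \<in> H" "is_diff_pred a" by (auto simp: badw_def)
    then have "mk (src a) (src a) (cst a) (strict a) \<in> (sat_step ^^ N) H"
      using steps_mono diff_mk bw a by (metis badw_def last_ConsL list.sel(1) subsetD)
    then show ?thesis using bw a by (intro bot_mk) (auto simp: badw_def)
  next
    case False
    define A where "A = [hd ws]"
    define B where "B = tl ws"
    have ws: "ws = A @ B" using bw by (cases ws) (auto simp: A_def B_def badw_def)
    have A: "A \<noteq> []" "length A \<le> 2^N" by (auto simp: A_def)
    have "tl ws \<noteq> []" using False bw by (cases ws) (auto simp: badw_def)
    then have B: "B \<noteq> []" "length B \<le> 2^N" using l by (auto simp: B_def)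
    have ch: "chain A" "chain B" "dst (last A) = src (hd B)" "set A \<subseteq> H" "set B \<subseteq> H"
      using bw A B unfolding ws badw_def chain_append by auto
    have inA: "col A \<in> (sat_step ^^ N) H" by (rule col_in) (use A ch d in auto)
    have inB: "col B \<in> (sat_step ^^ N) H" by (rule col_in) (use B ch d in auto)
    have e2: "dst (last B) = src (hd A)" using bw A B unfolding badw_def ws by simp
    have inA': "mk (src (hd A)) (src (hd B)) (wc A) (sw A) \<in> (sat_step ^^ N) H"
      using inA ch(3) by (simp add: col_def)
    have inB': "mk (src (hd B)) (src (hd A)) (wc B) (sw B) \<in> (sat_step ^^ N) H"
      using inB e2 by (simp add: col_def)
    show ?thesis
      by (rule bot_mk[OF inA' inB']) (use bw in \<open>simp add: ws badw_def\<close>)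
  qed
qed


lemma not_distinct_split: "\<not> distinct (map f xs) \<Longrightarrow> \<exists>A a B b C. xs = A @ a # B @ b # C \<and> f a = f b"
proof (induction xs)
  case Nil then show ?case by simp
next
  case (Cons x xs)
  show ?case
  proof (cases "distinct (map f xs)")
    case True
    with Cons.prems have "f x \<in> f ` set xs" by auto
    then obtain b where b: "b \<in> set xs" "f x = f b" by auto
    then obtain B C where "xs = B @ b # C" by (meson split_list)
    with b show ?thesis by (intro exI[of _ "[]"]) auto
  next
    case False
    then obtain A a B b C where "xs = A @ a # B @ b # C \<and> f a = f b" using Cons.IH by blast
    then show ?thesis by (intro exI[of _ "x # A"]) auto
  qed
qed

lemma bad_split: "wa + wb < (0::real) \<or> (wa + wb = 0 \<and> (sa \<or> sb)) \<Longrightarrow>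
   (wa < 0 \<or> (wa = 0 \<and> sa)) \<or> (wb < 0 \<or> (wb = 0 \<and> sb))"
  by auto

lemma vars_walk: "set ws \<subseteq> S \<Longrightarrow> src ` set ws \<subseteq> vars_set S"
  by (auto simp: vars_set_def vars_dl_sd)

lemma finite_vars: "finite S \<Longrightarrow> finite (vars_set S)"
  by (auto simp: vars_set_def vars_dl_sd)

lemma shorten: "finite S \<Longrightarrow> badw S ws \<Longrightarrow> \<exists>ws'. badw S ws' \<and> length ws' \<le> card (vars_set S)"
proof (induction "length ws" arbitrary: ws rule: less_induct)
  case less
  show ?case
  proof (cases "length ws \<le> card (vars_set S)")
    case True then show ?thesis using less by blast
  next
    case False
    have "card (set (map src ws)) \<le> card (vars_set S)"
      using less.prems vars_walk[of ws S] finite_vars[of S] by (auto simp: badw_def intro: card_mono)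
    then have "\<not> distinct (map src ws)" using False distinct_card by fastforce
    then obtain A a B b C where ws: "ws = A @ a # B @ b # C" and ab: "src a = src b"
      using not_distinct_split by blast
    have bw: "badw S ws" by (rule less.prems)
    have ws': "ws = A @ ((a # B) @ (b # C))" using ws by simp
    have "chain ws" using bw by (simp add: badw_def)
    then have f: "chain A" "chain (a # B)" "chain (b # C)" "A \<noteq> [] \<longrightarrow> dst (last A) = src a"
      "dst (last (a # B)) = src b"
      unfolding ws' chain_append by auto
    have ch: "chain (a # B)" "chain (A @ b # C)"
      using f ab unfolding chain_append by auto
    have c1: "dst (last (a # B)) = src (hd (a # B))"
      using f ab by simp
    have c2: "dst (last (A @ b # C)) = src (hd (A @ b # C))"
      using bw ab unfolding badw_def ws by (cases A) auto
    have s: "set (a # B) \<subseteq> S" "set (A @ b # C) \<subseteq> S" using bw unfolding badw_def ws by auto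
    have "wc ws = wc (a # B) + wc (A @ b # C)" "sw ws = (sw (a # B) \<or> sw (A @ b # C))"
      unfolding ws by auto
    then have "badw S (a # B) \<or> badw S (A @ b # C)"
      using bw ch c1 c2 s bad_split[of "wc (a # B)" "wc (A @ b # C)"] unfolding badw_def
      by (metis list.distinct(1) append_is_Nil_conv)
    moreover have "length (a # B) < length ws" "length (A @ b # C) < length ws" unfolding ws by auto
    ultimately show ?thesis using less by blast
  qed
qed


definition rep :: "'v dl set \<Rightarrow> 'v dl list \<Rightarrow> 'v \<Rightarrow> 'v \<Rightarrow> real \<Rightarrow> bool \<Rightarrow> bool" where
  "rep S ps x y c s = (ps \<noteq> [] \<and> chain ps \<and> set ps \<subseteq> S \<and> src (hd ps) = x \<and> dst (last ps) = y
     \<and> wc ps = c \<and> sw ps = s)"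

lemma realize: "chain ws \<Longrightarrow> ws \<noteq> [] \<Longrightarrow> \<forall>e\<in>set ws. \<exists>ps. rep S ps (src e) (dst e) (cst e) (strict e)
  \<Longrightarrow> \<exists>ps. rep S ps (src (hd ws)) (dst (last ws)) (wc ws) (sw ws)"
proof (induction ws rule: chain.induct)
  case 1 then show ?case by simp
next
  case (2 a) then show ?case by simp
next
  case (3 a b r)
  have "\<exists>qs. rep S qs (src (hd (b # r))) (dst (last (b # r))) (wc (b # r)) (sw (b # r))"
    by (rule "3.IH") (use "3.prems" in auto)
  then obtain qs where qs: "rep S qs (src b) (dst (last (b # r))) (wc (b # r)) (sw (b # r))"
    by auto
  from 3(4) obtain ps where ps: "rep S ps (src a) (dst a) (cst a) (strict a)" by auto
  have "rep S (ps @ qs) (src a) (dst (last (b # r))) (cst a + wc (b # r)) (strict a \<or> sw (b # r))"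
  proof -
    have e: "dst a = src b" using "3.prems"(1) by simp
    have p: "ps \<noteq> []" "chain ps" "set ps \<subseteq> S" "src (hd ps) = src a" "dst (last ps) = dst a"
      "wc ps = cst a" "sw ps = strict a" using ps unfolding rep_def by auto
    have q: "qs \<noteq> []" "chain qs" "set qs \<subseteq> S" "src (hd qs) = src b" "dst (last qs) = dst (last (b # r))"
      "wc qs = wc (b # r)" "sw qs = sw (b # r)" using qs unfolding rep_def by auto
    have "chain (ps @ qs)" unfolding chain_append using p q e by simp
    then show ?thesis unfolding rep_def using p q by simp
  qed
  then show ?case by (cases "r = []") auto
qed

lemma interval:
  fixes Lo Up :: "(real \<times> bool) set"
  assumes "finite Lo" "finite Up"
    and h: "\<forall>(l,s)\<in>Lo. \<forall>(u,s')\<in>Up. l \<le> u \<and> ((s \<or> s') \<longrightarrow> l < u)"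
  shows "\<exists>t. (\<forall>(l,s)\<in>Lo. l \<le> t \<and> (s \<longrightarrow> l < t)) \<and> (\<forall>(u,s)\<in>Up. t \<le> u \<and> (s \<longrightarrow> t < u))"
proof (cases "Lo = {}")
  case True
  show ?thesis
  proof (cases "Up = {}")
    case True
    then show ?thesis using \<open>Lo = {}\<close> by auto
  next
    case False
    define b where "b = Min (fst ` Up)"
    have "\<forall>(u,s)\<in>Up. b \<le> u"
    proof clarify
      fix u s assume "(u, s) \<in> Up" then have "u \<in> fst ` Up" by force
      then show "b \<le> u" by (simp add: b_def Min_le assms(2))
    qed
    then show ?thesis using \<open>Lo = {}\<close> by (intro exI[of _ "b - 1"]) auto
  qed
next
  case False
  define a where "a = Max (fst ` Lo)"
  have la: "\<forall>(l,s)\<in>Lo. l \<le> a"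
  proof clarify
    fix l s assume "(l, s) \<in> Lo" then have "l \<in> fst ` Lo" by force
    then show "l \<le> a" by (simp add: a_def Max_ge assms(1))
  qed
  have "a \<in> fst ` Lo" unfolding a_def using False assms(1) by (intro Max_in) auto
  then obtain sa where sa: "(a, sa) \<in> Lo" by force
  show ?thesis
  proof (cases "Up = {}")
    case True
    then show ?thesis using la by (intro exI[of _ "a + 1"]) auto
  next
    case False
    define b where "b = Min (fst ` Up)"
    have ub: "\<forall>(u,s)\<in>Up. b \<le> u"
    proof clarify
      fix u s assume "(u, s) \<in> Up" then have ub: "u \<in> fst ` Up" by force
      then show "b \<le> u" by (simp add: b_def Min_le assms(2))
    qed
    have "b \<in> fst ` Up" unfolding b_def using False assms(2) by (intro Min_in) auto
    then obtain sb where sb: "(b, sb) \<in> Up" by force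
    have H: "\<And>l s u s'. (l,s)\<in>Lo \<Longrightarrow> (u,s')\<in>Up \<Longrightarrow> l \<le> u \<and> ((s\<or>s') \<longrightarrow> l<u)"
      using h by fast
    have ab: "a \<le> b" using H[OF sa sb] by auto
    show ?thesis
    proof (cases "a < b")
      case True
      have "\<forall>(l,s)\<in>Lo. l \<le> (a + b) / 2 \<and> (s \<longrightarrow> l < (a + b) / 2)"
      proof (intro ballI, clarify)
        fix l s assume "(l, s) \<in> Lo" then have "l \<le> a" using la by auto
        then show "l \<le> (a + b) / 2 \<and> (s \<longrightarrow> l < (a + b) / 2)" using True by simp
      qed
      moreover have "\<forall>(u,s)\<in>Up. (a + b) / 2 \<le> u \<and> (s \<longrightarrow> (a + b) / 2 < u)"
      proof (intro ballI, clarify)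
        fix u s assume "(u, s) \<in> Up" then have "b \<le> u" using ub by auto
        then show "(a + b) / 2 \<le> u \<and> (s \<longrightarrow> (a + b) / 2 < u)" using True by simp
      qed
      ultimately show ?thesis by blast
    next
      case False
      with ab have "a = b" by simp
      have "\<forall>(l,s)\<in>Lo. l \<le> a \<and> (s \<longrightarrow> l < a)"
      proof (intro ballI, clarify)
        fix l s assume ls: "(l, s) \<in> Lo"
        then have "l \<le> a" using la by auto
        moreover have "s \<longrightarrow> l < b" using H[OF ls sb] by auto
        ultimately show "l \<le> a \<and> (s \<longrightarrow> l < a)" using \<open>a = b\<close> by simp
      qed
      moreover have "\<forall>(u,s)\<in>Up. a \<le> u \<and> (s \<longrightarrow> a < u)"
      proof (intro ballI, clarify)
        fix u s assume us: "(u, s) \<in> Up"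
        then have "b \<le> u" using ub by auto
        moreover have "s \<longrightarrow> a < u" using H[OF sa us] by auto
        ultimately show "a \<le> u \<and> (s \<longrightarrow> a < u)" using \<open>a = b\<close> by simp
      qed
      ultimately show ?thesis by blast
    qed
  qed
qed


lemma holds_mk: "holds \<rho> (mk x y c s) = (if s then \<rho> x < \<rho> y + c else \<rho> x \<le> \<rho> y + c)"
  by (simp add: mk_def)

lemma elim:
  "finite S \<Longrightarrow> \<forall>a\<in>S. is_diff_pred a \<Longrightarrow> \<forall>ws. \<not> badw S ws \<Longrightarrow> satisfiable S"
proof (induction "card (vars_set S)" arbitrary: S rule: less_induct)
  case less
  note fin = less.prems(1) and dif = less.prems(2) and nob = less.prems(3)
  show ?case
  proof (cases "vars_set S = {}")
    case True
    then have "S = {}" by (auto simp: vars_set_def vars_dl_sd)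
    then show ?thesis by (simp add: satisfiable_def)
  next
    case False
    then obtain z where z: "z \<in> vars_set S" by blast
    define S1 where "S1 = {a\<in>S. src a \<noteq> z \<and> dst a \<noteq> z}"
    define P where "P = {(a,b). a\<in>S \<and> b\<in>S \<and> dst a = z \<and> src b = z \<and> src a \<noteq> z \<and> dst b \<noteq> z}"
    define S' where "S' = S1 \<union> (\<lambda>(a,b). comb a b) ` P"
    have finP: "finite P"
      by (rule finite_subset[of _ "S \<times> S"]) (use fin in \<open>auto simp: P_def\<close>)
    have finS': "finite S'" using fin finP by (simp add: S'_def S1_def)
    have difS': "\<forall>a\<in>S'. is_diff_pred a" using dif by (auto simp: S'_def S1_def comb_def)
    have vsub: "vars_set S' \<subseteq> vars_set S - {z}"
    proof
      fix v assume "v \<in> vars_set S'"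
      then obtain e where e: "e \<in> S'" "v = src e \<or> v = dst e" by (auto simp: vars_set_def vars_dl_sd)
      show "v \<in> vars_set S - {z}"
      proof (cases "e \<in> S1")
        case True
        then show ?thesis using e by (auto simp: S1_def vars_set_def vars_dl_sd)
      next
        case False
        then obtain a b where ab: "(a,b) \<in> P" "e = comb a b" using e by (auto simp: S'_def)
        then show ?thesis using e by (auto simp: P_def comb_def vars_set_def vars_dl_sd)
      qed
    qed
    have card: "card (vars_set S') < card (vars_set S)"
      by (rule psubset_card_mono) (use vsub z finite_vars[OF fin] in auto)
    have repS: "\<forall>e\<in>S'. \<exists>ps. rep S ps (src e) (dst e) (cst e) (strict e)"
    proof
      fix e assume "e \<in> S'"
      then consider "e \<in> S1" | a b where "(a,b) \<in> P" "e = comb a b" by (auto simp: S'_def)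
      then show "\<exists>ps. rep S ps (src e) (dst e) (cst e) (strict e)"
      proof cases
        case 1
        then have "rep S [e] (src e) (dst e) (cst e) (strict e)" by (auto simp: rep_def S1_def)
        then show ?thesis by blast
      next
        case (2 a b)
        then have "rep S [a, b] (src e) (dst e) (cst e) (strict e)" by (auto simp: rep_def P_def comb_def)
        then show ?thesis by blast
      qed
    qed
    have nob': "\<forall>ws. \<not> badw S' ws"
    proof (intro allI notI)
      fix ws assume bw: "badw S' ws"
      then have "\<forall>e\<in>set ws. \<exists>ps. rep S ps (src e) (dst e) (cst e) (strict e)"
        using repS by (auto simp: badw_def)
      then obtain ps where "rep S ps (src (hd ws)) (dst (last ws)) (wc ws) (sw ws)"
        using realize[of ws S] bw by (auto simp: badw_def)
      then have "badw S ps" using bw by (auto simp: rep_def badw_def)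
      with nob show False by blast
    qed
    have "satisfiable S'" using less.hyps[OF card finS' difS' nob'] .
    then obtain \<rho> where \<rho>: "\<forall>g\<in>S'. holds \<rho> g" by (auto simp: satisfiable_def)
    define Lo where "Lo = (\<lambda>a. (\<rho> (src a) - cst a, strict a)) ` {a\<in>S. dst a = z \<and> src a \<noteq> z}"
    define Up where "Up = (\<lambda>b. (\<rho> (dst b) + cst b, strict b)) ` {b\<in>S. src b = z \<and> dst b \<noteq> z}"
    have key: "\<rho> (src a) - cst a \<le> \<rho> (dst b) + cst b \<and>
        ((strict a \<or> strict b) \<longrightarrow> \<rho> (src a) - cst a < \<rho> (dst b) + cst b)"
      if "a\<in>S" "dst a = z" "src a \<noteq> z" "b \<in> S" "src b = z" "dst b \<noteq> z" for a b
    proof -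
      have "(a, b) \<in> P" using that by (simp add: P_def)
      then have "comb a b \<in> S'" unfolding S'_def by force
      then have "holds \<rho> (comb a b)" using \<rho> by blast
      then show ?thesis by (cases "strict a"; cases "strict b") (simp_all add: comb_def holds_mk)
    qed
    have hb: "\<forall>(l,s)\<in>Lo. \<forall>(u,s')\<in>Up. l \<le> u \<and> ((s \<or> s') \<longrightarrow> l < u)"
    proof clarify
      fix l s u s' assume "(l, s) \<in> Lo" "(u, s') \<in> Up"
      then obtain a b where ab: "a\<in>S" "dst a = z" "src a \<noteq> z" "b \<in> S" "src b = z" "dst b \<noteq> z"
        and "(l, s) = (\<rho> (src a) - cst a, strict a)" "(u, s') = (\<rho> (dst b) + cst b, strict b)"
        unfolding Lo_def Up_def by blast
      then have "l = \<rho> (src a) - cst a" "s = strict a" "u = \<rho> (dst b) + cst b" "s' = strict b" by auto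
      then show "l \<le> u \<and> ((s \<or> s') \<longrightarrow> l < u)"
        using key[OF ab] by simp
    qed
    have fl: "finite Lo" "finite Up" using fin by (auto simp: Lo_def Up_def)
    from interval[OF fl hb] obtain t where tL: "\<forall>(l,s)\<in>Lo. l \<le> t \<and> (s \<longrightarrow> l < t)"
      and tU: "\<forall>(u,s)\<in>Up. t \<le> u \<and> (s \<longrightarrow> t < u)"
      by (elim exE conjE)
    define \<rho>' where "\<rho>' = \<rho>(z := t)"
    have "\<forall>a\<in>S. holds \<rho>' a"
    proof
      fix a assume a: "a \<in> S"
      have da: "is_diff_pred a" using dif a by auto
      consider "src a \<noteq> z \<and> dst a \<noteq> z" | "src a = z \<and> dst a = z" | "src a \<noteq> z \<and> dst a = z"
        | "src a = z \<and> dst a \<noteq> z" by blast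
      then show "holds \<rho>' a"
      proof cases
        case 1
        then have "a \<in> S'" using a by (simp add: S'_def S1_def)
        then have "holds \<rho> a" using \<rho> by blast
        then show ?thesis using 1 da by (simp add: holds_iff \<rho>'_def)
      next
        case 2
        have "\<not> badw S [a]" using nob by blast
        then have "\<not> (cst a < 0 \<or> (cst a = 0 \<and> strict a))" using a 2 by (simp add: badw_def)
        then show ?thesis using 2 da by (auto simp: holds_iff \<rho>'_def)
      next
        case 3
        then have "(\<rho> (src a) - cst a, strict a) \<in> Lo" using a by (auto simp: Lo_def)
        then have "\<rho> (src a) - cst a \<le> t \<and> (strict a \<longrightarrow> \<rho> (src a) - cst a < t)" using tL by auto
        then show ?thesis using 3 da by (auto simp: holds_iff \<rho>'_def)
      next
        case 4
        then have "(\<rho> (dst a) + cst a, strict a) \<in> Up" using a by (auto simp: Up_def)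
        then have "t \<le> \<rho> (dst a) + cst a \<and> (strict a \<longrightarrow> t < \<rho> (dst a) + cst a)" using tU by auto
        then show ?thesis using 4 da by (auto simp: holds_iff \<rho>'_def)
      qed
    qed
    then show ?thesis by (auto simp: satisfiable_def)
  qed
qed

theorem proposition3p11:
  fixes G :: "'v dl set"
  assumes "finite G"
    and "\<forall>g\<in>G. is_diff_pred g"
  shows "\<forall>G' \<subseteq> G. \<forall>N::nat. real N \<ge> log 2 (real (card (vars_set G))) \<longrightarrow>
           (Sat_unsat N G' \<longleftrightarrow> \<not> satisfiable G')"
proof (intro allI impI)
  fix G' :: "'v dl set" and N :: nat
  assume sub: "G' \<subseteq> G" and hN: "log 2 (real (card (vars_set G))) \<le> real N"
  have finG': "finite G'" using sub assms(1) finite_subset by blast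
  have dif': "\<forall>a\<in>G'. is_diff_pred a" using sub assms(2) by blast
  show "Sat_unsat N G' \<longleftrightarrow> \<not> satisfiable G'"
  proof
    assume su: "Sat_unsat N G'"
    show "\<not> satisfiable G'"
    proof
      assume "satisfiable G'"
      then obtain \<rho> where "\<forall>a\<in>G'. holds \<rho> a" by (auto simp: satisfiable_def)
      then have "\<forall>a\<in>(sat_step ^^ N) G'. holds \<rho> a" by (rule steps_sound)
      then show False using su bot_unsat unfolding Sat_unsat_def by blast
    qed
  next
    assume "\<not> satisfiable G'"
    then obtain ws where "badw G' ws" using elim[OF finG' dif'] by blast
    then obtain ws' where bw: "badw G' ws'" and len: "length ws' \<le> card (vars_set G')"
      using shorten[OF finG'] by blast
    have c1: "card (vars_set G') \<le> card (vars_set G)"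
      by (rule card_mono) (use finite_vars[OF assms(1)] sub in \<open>auto simp: vars_set_def\<close>)
    have c2: "card (vars_set G) \<le> 2 ^ N"
    proof (cases "card (vars_set G) = 0")
      case True then show ?thesis by simp
    next
      case False
      then have "real (card (vars_set G)) \<le> 2 powr real N"
        using hN by (subst (asm) log_le_iff) auto
      then have "real (card (vars_set G)) \<le> 2 ^ N" by (simp add: powr_realpow)
      then show ?thesis by (metis of_nat_le_iff of_nat_numeral of_nat_power)
    qed
    show "Sat_unsat N G'" unfolding Sat_unsat_def
      by (rule bad_detect[OF bw dif']) (use len c1 c2 in linarith)
  qed
qed

end
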